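(* Assume the standing hypotheses and let $\sigma\in(0,1)$. For $(x,\lambda)\in\mathcal B((x^*,\lambda^* ),\delta)$ with $x>0,\lambda>0$, let $(\Delta x^N,\Delta\lambda^N)$ be the Newton direction for $\mu^+=\sigma\mu$, and define for $i=1,\dots,n$ $$\Delta x_i^C=-x_i+\frac{\mu^+}{\lambda_i},\qquad \Delta\lambda_i^C=-\lambda_i+\frac{\mu^+}{x_i}.$$ Then for all $i$, $\Delta x_i^C-\Delta x_i^N=\frac{x_i}{\lambda_i}\Delta\lambda_i^N$ and $\Delta\lambda_i^C-\Delta\lambda_i^N=\frac{\lambda_i}{x_i}\Delta x_i^N$. Moreover, for every $C_1>0$ there exist $\rho>0$, $\bar\mu\in(0,\hat\mu]$ and $C>0$ such that for all $\mu\in(0,\bar\mu]$ and all $(x,\lambda)\in\mathcal B((x^*,\lambda^* ),\delta)$ with $x>0,\lambda>0$, $\|(x,\lambda)-(x^\mu,\lambda^\mu)\|<\rho$, $\|F_\mu(x,\lambda)\|\le C_1\mu$: $$|\Delta x_i^C-\Delta x_i^N|\le C\mu^2\ (i\in\mathcal A),\qquad |\Delta\lambda_i^C-\Delta\lambda_i^N|\le C\mu^2\ (i\in\mathcal I).$$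
   Context: Problem: minimize $f(x)$ subject to $x\ge0$, $f:\mathbb R^n\to\mathbb R$ twice continuously differentiable with locally Lipschitz Hessian. Norms Euclidean; $e$ all-ones; $X=\mathrm{diag}(x)$, $\Lambda=\mathrm{diag}(\lambda)$; $F_\mu(x,\lambda)=\begin{bmatrix}\nabla f(x)-\lambda\\ \Lambda Xe-\mu e\end{bmatrix}$, $F'(x,\lambda)=\begin{bmatrix}\nabla^2f(x)&-I\\ \Lambda&X\end{bmatrix}$. The Newton direction for $\mu^+=\sigma\mu$ solves $F'(x,\lambda)(\Delta x^N,\Delta\lambda^N)=-F_{\mu^+}(x,\lambda)$. Standing hypotheses: $(x^*,\lambda^* )$ satisfies $\nabla f(x^* )=\lambda^*$, $x^*\ge0$, $\lambda^*\ge0$, $x_i^*\lambda_i^*=0$, $x^*+\lambda^*>0$, $[\nabla^2f(x^* )]_{\mathcal I\mathcal I}\succ0$, where $\mathcal A=\{i:x^*_i=0\}$, $\mathcal I=\{i:x_i^*>0\}$. $\delta>0$: $F'$ nonsingular on $\mathcal B((x^*,\lambda^* ),\delta)$ with $\|F'^{-1}\|\le M$; $\hat\mu>0$: for $\mu\in(0,\hat\mu]$ a Lipschitz barrier trajectory $(x^\mu,\lambda^\mu)\in\mathcal B((x^*,\lambda^* ),\delta)$ with $F_\mu(x^\mu,\lambda^\mu)=0$, $\|(x^\mu,\lambda^\mu)-(x^*,\lambda^* )\|\le C_4\mu$ exists. *)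

theory Defs
  imports "HOL-Analysis.Analysis"
begin

text \<open>Vectors in R^n are modelled as real^'n; a primal-dual pair (x,lambda) is an element
of (real^'n) \<times> (real^'n), whose product norm is exactly the Euclidean norm of the stacked vector.
g is the gradient of f and H its Hessian (see the hypotheses of the theorem).\<close>

definition Fmu :: "(real^'n \<Rightarrow> real^'n) \<Rightarrow> real \<Rightarrow> real^'n \<Rightarrow> real^'n \<Rightarrow> (real^'n) \<times> (real^'n)" where
  "Fmu g \<mu> x l = (g x - l, (\<chi> i. l$i * x$i - \<mu>))"

definition Fprime :: "(real^'n \<Rightarrow> real^'n^'n) \<Rightarrow> real^'n \<Rightarrow> real^'n
    \<Rightarrow> (real^'n) \<times> (real^'n) \<Rightarrow> (real^'n) \<times> (real^'n)" where
  "Fprime H x l d = (H x *v fst d - snd d, (\<chi> i. l$i * (fst d)$i + x$i * (snd d)$i))"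

definition dxC :: "real \<Rightarrow> real^'n \<Rightarrow> real^'n \<Rightarrow> real^'n" where
  "dxC \<mu>p x l = (\<chi> i. - x$i + \<mu>p / l$i)"

definition dlC :: "real \<Rightarrow> real^'n \<Rightarrow> real^'n \<Rightarrow> real^'n" where
  "dlC \<mu>p x l = (\<chi> i. - l$i + \<mu>p / x$i)"

end

theory Submission
  imports Defs
begin

lemma Fprime_linear: "linear (Fprime H x l)"
  unfolding Fprime_def
  by (intro linearI) (auto simp: vec_eq_iff matrix_vector_right_distrib algebra_simps )

lemma inv_bound:
  fixes F :: "('a::euclidean_space) \<Rightarrow> 'a"
  assumes "linear F" "bij F" "onorm (inv F) \<le> M" "F d = y"
  shows "norm d \<le> M * norm y"
proof -
  have bl: "bounded_linear (inv F)"
    using assms(1,2) by (metis bij_is_inj inj_linear_imp_inv_linear linear_linear)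
  have "d = inv F y" using assms(2,4) by (metis bij_is_inj inv_f_f)
  hence "norm d \<le> onorm (inv F) * norm y" using onorm[OF bl] by simp
  also have "\<dots> \<le> M * norm y" by (rule mult_right_mono[OF assms(3)]) simp
  finally show ?thesis .
qed
lemma key:
  fixes p q b \<mu> m c d :: real
  assumes "p > 0" "q \<ge> m/4" "m > 0" "p*q \<le> c*\<mu>" "c \<ge> 0" "\<bar>b\<bar> \<le> d*\<mu>" "\<mu> > 0" "d \<ge> 0"
  shows "\<bar>p/q*b\<bar> \<le> (16*c/m^2*d) * \<mu>^2"
proof -
  have q: "q > 0" using assms by linarith
  have "p*(m/4) \<le> p*q" using assms by (intro mult_left_mono) auto
  hence "p*(m/4) \<le> c*\<mu>" using assms by linarith
  hence p: "p \<le> 4*c*\<mu>/m" using assms by (simp add: field_simps)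
  have "p/q \<le> p/(m/4)" using assms by (intro divide_left_mono) auto
  also have "\<dots> = 4*p/m" by simp
  also have "\<dots> \<le> 4*(4*c*\<mu>/m)/m" using p assms by (intro divide_right_mono) auto
  finally have pq: "p/q \<le> 16*c*\<mu>/m^2" by (simp add: power2_eq_square)
  have "\<bar>p/q*b\<bar> = p/q*\<bar>b\<bar>" using assms q by (simp add: abs_mult)
  also have "\<dots> \<le> (16*c*\<mu>/m^2) * (d*\<mu>)" using pq assms q by (intro mult_mono) auto
  also have "\<dots> = (16*c/m^2*d) * \<mu>^2" by (simp add: power2_eq_square)
  finally show ?thesis .
qed

theorem proposition2:
  fixes f :: "real^'n \<Rightarrow> real"
    and g :: "real^'n \<Rightarrow> real^'n"
    and H :: "real^'n \<Rightarrow> real^'n^'n"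
    and xs ls :: "real^'n"
    and \<delta> M \<mu>hat C4 \<sigma> :: real
    and xmu lmu :: "real \<Rightarrow> real^'n"
  assumes grad: "\<And>x. (f has_derivative (\<lambda>h. g x \<bullet> h)) (at x)"
    and hess: "\<And>x. (g has_derivative (\<lambda>h. H x *v h)) (at x)"
    and hess_cont: "continuous_on UNIV H"
    and hess_loclip: "\<And>z. \<exists>r>0. \<exists>L. L-lipschitz_on (ball z r) H"
    and kkt: "g xs = ls"
    and xs_nn: "\<And>i. xs$i \<ge> 0" and ls_nn: "\<And>i. ls$i \<ge> 0"
    and compl: "\<And>i. xs$i * ls$i = 0"
    and strict: "\<And>i. xs$i + ls$i > 0"
    and pd: "\<And>v. v \<noteq> 0 \<Longrightarrow> (\<forall>i. xs$i = 0 \<longrightarrow> v$i = 0) \<Longrightarrow> v \<bullet> (H xs *v v) > 0"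
    and \<delta>_pos: "\<delta> > 0"
    and nonsing: "\<And>x l. (x, l) \<in> ball (xs, ls) \<delta> \<Longrightarrow>
                    bij (Fprime H x l) \<and> onorm (inv (Fprime H x l)) \<le> M"
    and \<mu>hat_pos: "\<mu>hat > 0"
    and traj_ball: "\<And>\<mu>. \<mu> \<in> {0<..\<mu>hat} \<Longrightarrow> (xmu \<mu>, lmu \<mu>) \<in> ball (xs, ls) \<delta>"
    and traj_eq: "\<And>\<mu>. \<mu> \<in> {0<..\<mu>hat} \<Longrightarrow> Fmu g \<mu> (xmu \<mu>) (lmu \<mu>) = 0"
    and traj_bound: "\<And>\<mu>. \<mu> \<in> {0<..\<mu>hat} \<Longrightarrow> norm ((xmu \<mu>, lmu \<mu>) - (xs, ls)) \<le> C4 * \<mu>"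
    and traj_lip: "\<exists>L. L-lipschitz_on {0<..\<mu>hat} (\<lambda>\<mu>. (xmu \<mu>, lmu \<mu>))"
    and \<sigma>: "0 < \<sigma>" "\<sigma> < 1"
  shows "(\<forall>\<mu>>0. \<forall>x l. (x, l) \<in> ball (xs, ls) \<delta> \<and> (\<forall>i. x$i > 0) \<and> (\<forall>i. l$i > 0) \<longrightarrow>
           (\<forall>dN. Fprime H x l dN = - Fmu g (\<sigma> * \<mu>) x l \<longrightarrow>
              (\<forall>i. (dxC (\<sigma> * \<mu>) x l)$i - (fst dN)$i = x$i / l$i * (snd dN)$i \<and>
                   (dlC (\<sigma> * \<mu>) x l)$i - (snd dN)$i = l$i / x$i * (fst dN)$i)))
       \<and> (\<forall>C1>0. \<exists>\<rho>>0. \<exists>\<mu>bar. 0 < \<mu>bar \<and> \<mu>bar \<le> \<mu>hat \<and> (\<exists>C>0.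
           \<forall>\<mu>. 0 < \<mu> \<and> \<mu> \<le> \<mu>bar \<longrightarrow>
           (\<forall>x l. (x, l) \<in> ball (xs, ls) \<delta> \<and> (\<forall>i. x$i > 0) \<and> (\<forall>i. l$i > 0)
              \<and> norm ((x, l) - (xmu \<mu>, lmu \<mu>)) < \<rho> \<and> norm (Fmu g \<mu> x l) \<le> C1 * \<mu> \<longrightarrow>
              (\<forall>dN. Fprime H x l dN = - Fmu g (\<sigma> * \<mu>) x l \<longrightarrow>
                 (\<forall>i. xs$i = 0 \<longrightarrow> \<bar>(dxC (\<sigma> * \<mu>) x l)$i - (fst dN)$i\<bar> \<le> C * \<mu>^2) \<and>
                 (\<forall>i. xs$i > 0 \<longrightarrow> \<bar>(dlC (\<sigma> * \<mu>) x l)$i - (snd dN)$i\<bar> \<le> C * \<mu>^2)))))"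
  proof -
  have part1: "\<forall>\<mu>>0. \<forall>x l. (x, l) \<in> ball (xs, ls) \<delta> \<and> (\<forall>i. x$i > 0) \<and> (\<forall>i. l$i > 0) \<longrightarrow>
           (\<forall>dN. Fprime H x l dN = - Fmu g (\<sigma> * \<mu>) x l \<longrightarrow>
              (\<forall>i. (dxC (\<sigma> * \<mu>) x l)$i - (fst dN)$i = x$i / l$i * (snd dN)$i \<and>
                   (dlC (\<sigma> * \<mu>) x l)$i - (snd dN)$i = l$i / x$i * (fst dN)$i))"
  proof (intro allI impI)
    fix \<mu> :: real and x l :: "real^'n" and dN i
    assume h: "(x, l) \<in> ball (xs, ls) \<delta> \<and> (\<forall>i. x$i > 0) \<and> (\<forall>i. l$i > 0)"
      and e: "Fprime H x l dN = - Fmu g (\<sigma> * \<mu>) x l"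
    have "snd (Fprime H x l dN) $ i = snd (- Fmu g (\<sigma> * \<mu>) x l) $ i" using e by simp
    hence eq: "l$i * (fst dN)$i + x$i * (snd dN)$i = - (l$i * x$i - \<sigma> * \<mu>)"
      by (simp add: Fprime_def Fmu_def)
    have xp: "x$i > 0" and lp: "l$i > 0" using h by auto
    show "(dxC (\<sigma> * \<mu>) x l)$i - (fst dN)$i = x$i / l$i * (snd dN)$i \<and>
          (dlC (\<sigma> * \<mu>) x l)$i - (snd dN)$i = l$i / x$i * (fst dN)$i"
      using eq xp lp by (simp add: dxC_def dlC_def field_simps)
  qed
  have part2: "\<forall>C1>0. \<exists>\<rho>>0. \<exists>\<mu>bar. 0 < \<mu>bar \<and> \<mu>bar \<le> \<mu>hat \<and> (\<exists>C>0.
           \<forall>\<mu>. 0 < \<mu> \<and> \<mu> \<le> \<mu>bar \<longrightarrow>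
           (\<forall>x l. (x, l) \<in> ball (xs, ls) \<delta> \<and> (\<forall>i. x$i > 0) \<and> (\<forall>i. l$i > 0)
              \<and> norm ((x, l) - (xmu \<mu>, lmu \<mu>)) < \<rho> \<and> norm (Fmu g \<mu> x l) \<le> C1 * \<mu> \<longrightarrow>
              (\<forall>dN. Fprime H x l dN = - Fmu g (\<sigma> * \<mu>) x l \<longrightarrow>
                 (\<forall>i. xs$i = 0 \<longrightarrow> \<bar>(dxC (\<sigma> * \<mu>) x l)$i - (fst dN)$i\<bar> \<le> C * \<mu>^2) \<and>
                 (\<forall>i. xs$i > 0 \<longrightarrow> \<bar>(dlC (\<sigma> * \<mu>) x l)$i - (snd dN)$i\<bar> \<le> C * \<mu>^2))))"
  proof (intro allI impI)
    fix C1 :: real assume C1: "C1 > 0"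
    define m where "m = Min (range (\<lambda>i. xs$i + ls$i))"
    have m_le: "\<And>i. m \<le> xs$i + ls$i" unfolding m_def by (intro Min_le) auto
    have m_pos: "m > 0" unfolding m_def using strict by (subst Min_gr_iff) auto
    define K where "K = norm (\<chi> (i::'n). (1::real))"
    have K: "K \<ge> 0" unfolding K_def by simp
    define \<mu>bar where "\<mu>bar = min \<mu>hat (m / (4*(\<bar>C4\<bar>+1)))"
    define C where "C = 16*(1+C1)/m^2*(\<bar>M\<bar>*(C1+K)) + 1"
    have Cpos: "C > 0" unfolding C_def using C1 K m_pos by (intro add_nonneg_pos) auto
    have \<mu>bar_pos: "\<mu>bar > 0" unfolding \<mu>bar_def using \<mu>hat_pos m_pos by auto
    have \<mu>bar_le: "\<mu>bar \<le> \<mu>hat" unfolding \<mu>bar_def by simp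
    have main: "\<forall>\<mu>. 0 < \<mu> \<and> \<mu> \<le> \<mu>bar \<longrightarrow>
           (\<forall>x l. (x, l) \<in> ball (xs, ls) \<delta> \<and> (\<forall>i. x$i > 0) \<and> (\<forall>i. l$i > 0)
              \<and> norm ((x, l) - (xmu \<mu>, lmu \<mu>)) < m/2 \<and> norm (Fmu g \<mu> x l) \<le> C1 * \<mu> \<longrightarrow>
              (\<forall>dN. Fprime H x l dN = - Fmu g (\<sigma> * \<mu>) x l \<longrightarrow>
                 (\<forall>i. xs$i = 0 \<longrightarrow> \<bar>(dxC (\<sigma> * \<mu>) x l)$i - (fst dN)$i\<bar> \<le> C * \<mu>^2) \<and>
                 (\<forall>i. xs$i > 0 \<longrightarrow> \<bar>(dlC (\<sigma> * \<mu>) x l)$i - (snd dN)$i\<bar> \<le> C * \<mu>^2)))"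
    proof ((intro allI impI), rule conjI)
      fix \<mu> :: real and x l :: "real^'n" and dN
      assume \<mu>: "0 < \<mu> \<and> \<mu> \<le> \<mu>bar"
        and h: "(x, l) \<in> ball (xs, ls) \<delta> \<and> (\<forall>i. x$i > 0) \<and> (\<forall>i. l$i > 0)
              \<and> norm ((x, l) - (xmu \<mu>, lmu \<mu>)) < m/2 \<and> norm (Fmu g \<mu> x l) \<le> C1 * \<mu>"
        and e: "Fprime H x l dN = - Fmu g (\<sigma> * \<mu>) x l"
      have \<mu>pos: "\<mu> > 0" using \<mu> by simp
      have \<mu>hat: "\<mu> \<in> {0<..\<mu>hat}" using \<mu> unfolding \<mu>bar_def by auto
      have "\<bar>C4\<bar> * \<mu> \<le> \<bar>C4\<bar> * (m / (4*(\<bar>C4\<bar>+1)))"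
        using \<mu> unfolding \<mu>bar_def by (intro mult_left_mono) auto
      also have "\<dots> \<le> m/4" using m_pos by (simp add: field_simps)
      finally have c4: "\<bar>C4\<bar> * \<mu> \<le> m/4" .
      have "norm ((xmu \<mu>, lmu \<mu>) - (xs, ls)) \<le> C4 * \<mu>" by (rule traj_bound[OF \<mu>hat])
      also have "\<dots> \<le> \<bar>C4\<bar> * \<mu>" using \<mu>pos by (intro mult_right_mono) auto
      finally have tr: "norm ((xmu \<mu>, lmu \<mu>) - (xs, ls)) \<le> m/4" using c4 by linarith
      have "norm ((x, l) - (xs, ls)) \<le> norm ((x, l) - (xmu \<mu>, lmu \<mu>)) + norm ((xmu \<mu>, lmu \<mu>) - (xs, ls))"
        using norm_triangle_ineq[of "(x, l) - (xmu \<mu>, lmu \<mu>)" "(xmu \<mu>, lmu \<mu>) - (xs, ls)"] by simp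
      hence cl: "norm ((x, l) - (xs, ls)) < 3*m/4" using tr h by linarith
      have compx: "\<bar>x$i - xs$i\<bar> < 3*m/4" for i
      proof -
        have "\<bar>x$i - xs$i\<bar> = \<bar>(x - xs)$i\<bar>" by simp
        also have "\<dots> \<le> norm (x - xs)" by (rule component_le_norm_cart)
        also have "\<dots> \<le> norm (x - xs, l - ls)" by (rule norm_fst_le)
        finally show ?thesis using cl by simp
      qed
      have compL: "\<bar>l$i - ls$i\<bar> < 3*m/4" for i
      proof -
        have "\<bar>l$i - ls$i\<bar> = \<bar>(l - ls)$i\<bar>" by simp
        also have "\<dots> \<le> norm (l - ls)" by (rule component_le_norm_cart)
        also have "\<dots> \<le> norm (x - xs, l - ls)" by (rule norm_snd_le)
        finally show ?thesis using cl by simp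
      qed
      have prod: "x$i * l$i \<le> (1+C1) * \<mu>" for i
      proof -
        have "\<bar>(snd (Fmu g \<mu> x l))$i\<bar> \<le> norm (snd (Fmu g \<mu> x l))" by (rule component_le_norm_cart)
        also have "\<dots> \<le> norm (Fmu g \<mu> x l)" by (metis norm_snd_le prod.collapse)
        finally have "\<bar>l$i * x$i - \<mu>\<bar> \<le> C1 * \<mu>" using h by (simp add: Fmu_def)
        thus ?thesis by (simp add: algebra_simps abs_le_iff)
      qed
      have Feq: "Fmu g (\<sigma> * \<mu>) x l = Fmu g \<mu> x l + (0, ((1-\<sigma>)*\<mu>) *\<^sub>R (\<chi> (i::'n). (1::real)))"
        by (simp add: Fmu_def vec_eq_iff algebra_simps)
      have "norm (Fmu g (\<sigma> * \<mu>) x l) \<le> norm (Fmu g \<mu> x l) + norm ((0::real^'n), ((1-\<sigma>)*\<mu>) *\<^sub>R (\<chi> (i::'n). (1::real)))"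
        unfolding Feq by (rule norm_triangle_ineq)
      also have "norm ((0::real^'n), ((1-\<sigma>)*\<mu>) *\<^sub>R (\<chi> (i::'n). (1::real))) = (1-\<sigma>)*\<mu>*K"
        using \<sigma> \<mu>pos by (simp add: norm_Pair K_def)
      also have "(1-\<sigma>)*\<mu>*K \<le> K*\<mu>" using \<sigma> \<mu>pos K by (simp add: mult_left_le_one_le algebra_simps mult_right_le_one_le)
      finally have Fb: "norm (Fmu g (\<sigma> * \<mu>) x l) \<le> (C1 + K) * \<mu>" using h by (simp add: algebra_simps)
      have ns: "bij (Fprime H x l) \<and> onorm (inv (Fprime H x l)) \<le> M" using nonsing h by blast
      hence ns': "onorm (inv (Fprime H x l)) \<le> \<bar>M\<bar>" by linarith
      have "norm dN \<le> \<bar>M\<bar> * norm (- Fmu g (\<sigma> * \<mu>) x l)"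
        by (rule inv_bound[OF Fprime_linear _ ns' e]) (use ns in blast)
      also have "\<dots> \<le> \<bar>M\<bar> * ((C1 + K) * \<mu>)" using Fb by (intro mult_left_mono) auto
      finally have dNb: "norm dN \<le> (\<bar>M\<bar> * (C1 + K)) * \<mu>" by simp
      have dx: "\<bar>(fst dN)$i\<bar> \<le> (\<bar>M\<bar> * (C1 + K)) * \<mu>" for i
        using component_le_norm_cart[of "fst dN" i] norm_fst_le[of "fst dN" "snd dN"] dNb by simp
      have dl: "\<bar>(snd dN)$i\<bar> \<le> (\<bar>M\<bar> * (C1 + K)) * \<mu>" for i
        using component_le_norm_cart[of "snd dN" i] norm_snd_le[of "snd dN" "fst dN"] dNb by simp
      have hp: "(x, l) \<in> ball (xs, ls) \<delta> \<and> (\<forall>i. x$i > 0) \<and> (\<forall>i. l$i > 0)" using h by blast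
      have C_ge: "(16*(1+C1)/m^2*(\<bar>M\<bar>*(C1+K))) * \<mu>^2 \<le> C * \<mu>^2"
        unfolding C_def by (intro mult_right_mono) auto
      show "\<forall>i. xs$i = 0 \<longrightarrow> \<bar>(dxC (\<sigma> * \<mu>) x l)$i - (fst dN)$i\<bar> \<le> C * \<mu>^2"
      proof (intro allI impI)
        fix i assume z: "xs$i = 0"
        have lq: "l$i \<ge> m/4" using compL[of i] m_le[of i] z by linarith
        have "\<bar>x$i / l$i * (snd dN)$i\<bar> \<le> (16*(1+C1)/m^2*(\<bar>M\<bar>*(C1+K))) * \<mu>^2"
          by (rule key) (use h lq m_pos prod C1 dl \<mu>pos K in auto)
        moreover have "(dxC (\<sigma> * \<mu>) x l)$i - (fst dN)$i = x$i / l$i * (snd dN)$i"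
          using part1 \<mu>pos hp e by blast
        ultimately show "\<bar>(dxC (\<sigma> * \<mu>) x l)$i - (fst dN)$i\<bar> \<le> C * \<mu>^2"
          using C_ge by simp
      qed
      show "\<forall>i. xs$i > 0 \<longrightarrow> \<bar>(dlC (\<sigma> * \<mu>) x l)$i - (snd dN)$i\<bar> \<le> C * \<mu>^2"
      proof (intro allI impI)
        fix i assume z: "xs$i > 0"
        have "ls$i = 0" using compl[of i] z by simp
        hence xq: "x$i \<ge> m/4" using compx[of i] m_le[of i] by linarith
        have pr: "l$i * x$i \<le> (1+C1) * \<mu>" using prod[of i] by (simp add: mult.commute)
        have "\<bar>l$i / x$i * (fst dN)$i\<bar> \<le> (16*(1+C1)/m^2*(\<bar>M\<bar>*(C1+K))) * \<mu>^2"
          by (rule key) (use h xq m_pos pr C1 dx \<mu>pos K in auto)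
        moreover have "(dlC (\<sigma> * \<mu>) x l)$i - (snd dN)$i = l$i / x$i * (fst dN)$i"
          using part1 \<mu>pos hp e by blast
        ultimately show "\<bar>(dlC (\<sigma> * \<mu>) x l)$i - (snd dN)$i\<bar> \<le> C * \<mu>^2"
          using C_ge by simp
      qed
    qed
    show "\<exists>\<rho>>0. \<exists>\<mu>bar. 0 < \<mu>bar \<and> \<mu>bar \<le> \<mu>hat \<and> (\<exists>C>0.
           \<forall>\<mu>. 0 < \<mu> \<and> \<mu> \<le> \<mu>bar \<longrightarrow>
           (\<forall>x l. (x, l) \<in> ball (xs, ls) \<delta> \<and> (\<forall>i. x$i > 0) \<and> (\<forall>i. l$i > 0)
              \<and> norm ((x, l) - (xmu \<mu>, lmu \<mu>)) < \<rho> \<and> norm (Fmu g \<mu> x l) \<le> C1 * \<mu> \<longrightarrow>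
              (\<forall>dN. Fprime H x l dN = - Fmu g (\<sigma> * \<mu>) x l \<longrightarrow>
                 (\<forall>i. xs$i = 0 \<longrightarrow> \<bar>(dxC (\<sigma> * \<mu>) x l)$i - (fst dN)$i\<bar> \<le> C * \<mu>^2) \<and>
                 (\<forall>i. xs$i > 0 \<longrightarrow> \<bar>(dlC (\<sigma> * \<mu>) x l)$i - (snd dN)$i\<bar> \<le> C * \<mu>^2))))"
      apply (rule exI[of _ "m/2"])
      using main m_pos \<mu>bar_pos \<mu>bar_le Cpos by auto
  qed
  show ?thesis using part1 part2 by blast
qed

end
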